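(* In the setting of the context, suppose $\mathcal G_{el}$ is connected and for every $i\in\mathcal D$ the gains satisfy $k^C_{1,i}<1$, $k^C_{2,i}<R^C_{ti}$, $k^C_{3,i}>0$, $k^V_{1,i}<1$, $k^V_{2,i}<R^V_{ti}$, $0<k^V_{3,i}<\frac{1}{L^V_{ti}}(k^V_{1,i}-1)(k^V_{2,i}-R^V_{ti})$. Then the origin of the linear system $\dot{\mathbf x}=\mathbf F\mathbf x$, $\mathbf x\in\mathbb{R}^{5N}$, is asymptotically stable.
   Context: Let $N\ge1$, $\mathcal D=\{1,\dots,N\}$, $\mathcal G_{el}$ an undirected graph on $\mathcal D$ with neighbor sets $\mathcal N_i$; for each $i$ let $C_{ti},L^C_{ti},R^C_{ti},L^V_{ti},R^V_{ti},R_{Li}>0$ and for each edge $R_{ij}=R_{ji}>0$. Let $$F_i=\begin{bmatrix}0&\frac{1}{C_{ti}}&0&\frac{1}{C_{ti}}&0\\ \frac{k^C_{1,i}-1}{L^C_{ti}}&\frac{k^C_{2,i}-R^C_{ti}}{L^C_{ti}}&\frac{k^C_{3,i}}{L^C_{ti}}&0&0\\ 0&-1&0&0&0\\ \frac{k^V_{1,i}-1}{L^V_{ti}}&0&0&\frac{k^V_{2,i}-R^V_{ti}}{L^V_{ti}}&\frac{k^V_{3,i}}{L^V_{ti}}\\ -1&0&0&0&0\end{bmatrix},$$ $e_1=(1,0,0,0,0)^T$, and let $\mathbf F\in\mathbb{R}^{5N\times5N}$ have $(i,i)$ block $F_i-\Big(\frac{1}{R_{Li}C_{ti}}+\sum_{j\in\mathcal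 N_i}\frac{1}{R_{ij}C_{ti}}\Big)e_1e_1^T$ and $(i,j)$ block ($j\ne i$) equal to $\frac{1}{R_{ij}C_{ti}}e_1e_1^T$ if $j\in\mathcal N_i$, $0$ otherwise. (This is the closed-loop dynamics, with exogenous inputs set to zero, of a cluster of $N$ DC microgrids, each with state: bus voltage, current-controlled converter filter current, its error integrator, voltage-controlled converter filter current, its error integrator.) *)

theory Defs
  imports "HOL-Analysis.Analysis"
begin

definition is_solution :: "('a::real_normed_vector \<Rightarrow> 'a) \<Rightarrow> (real \<Rightarrow> 'a) \<Rightarrow> bool" where
  "is_solution f x \<longleftrightarrow>
     (\<forall>t\<ge>0. (x has_vector_derivative f (x t)) (at t within {0..}))"

definition asymptotically_stable_origin :: "('a::real_normed_vector \<Rightarrow> 'a) \<Rightarrow> bool" where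
  "asymptotically_stable_origin f \<longleftrightarrow>
     f 0 = 0 \<and>
     (\<forall>\<epsilon>>0. \<exists>\<delta>>0. \<forall>x. is_solution f x \<and> norm (x 0) < \<delta> \<longrightarrow> (\<forall>t\<ge>0. norm (x t) < \<epsilon>)) \<and>
     (\<exists>\<delta>>0. \<forall>x. is_solution f x \<and> norm (x 0) < \<delta> \<longrightarrow> (x \<longlongrightarrow> 0) at_top)"

definition E11 :: "real^5^5" where
  "E11 = (\<chi> r c. if r = 1 \<and> c = 1 then 1 else 0)"

definition Floc :: "real \<Rightarrow> real \<Rightarrow> real \<Rightarrow> real \<Rightarrow> real \<Rightarrow>
    real \<Rightarrow> real \<Rightarrow> real \<Rightarrow> real \<Rightarrow> real \<Rightarrow> real \<Rightarrow> real^5^5" where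
  "Floc Ct LC RC LV RV kC1 kC2 kC3 kV1 kV2 kV3 =
     vector [ vector [0, 1/Ct, 0, 1/Ct, 0],
              vector [(kC1 - 1)/LC, (kC2 - RC)/LC, kC3/LC, 0, 0],
              vector [0, -1, 0, 0, 0],
              vector [(kV1 - 1)/LV, 0, 0, (kV2 - RV)/LV, kV3/LV],
              vector [-1, 0, 0, 0, 0] ]"

text \<open>The full closed-loop matrix as a block operator on real^5^'n
  (the state of node i is x$i :: real^5): block (i,j) is applied to x$j and summed over j.\<close>
definition Fblock ::
  "('n \<Rightarrow> 'n \<Rightarrow> bool) \<Rightarrow> ('n \<Rightarrow> 'n \<Rightarrow> real) \<Rightarrow> ('n \<Rightarrow> real) \<Rightarrow> ('n \<Rightarrow> real)
     \<Rightarrow> ('n \<Rightarrow> real^5^5) \<Rightarrow> 'n \<Rightarrow> 'n \<Rightarrow> real^5^5" where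
  "Fblock E R RL Ct Fl i j =
     (if j = i then Fl i - (1 / (RL i * Ct i) + (\<Sum>k\<in>{k. E i k}. 1 / (R i k * Ct i))) *\<^sub>R E11
      else if E i j then (1 / (R i j * Ct i)) *\<^sub>R E11 else 0)"

definition Fsys ::
  "('n::finite \<Rightarrow> 'n \<Rightarrow> bool) \<Rightarrow> ('n \<Rightarrow> 'n \<Rightarrow> real) \<Rightarrow> ('n \<Rightarrow> real) \<Rightarrow> ('n \<Rightarrow> real)
     \<Rightarrow> ('n \<Rightarrow> real^5^5) \<Rightarrow> real^5^'n \<Rightarrow> real^5^'n" where
  "Fsys E R RL Ct Fl x = (\<chi> i. \<Sum>j\<in>UNIV. Fblock E R RL Ct Fl i j *v (x $ j))"

end

theory Submission
  imports Defs
begin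
lemma ab_le: "0 < (t::real) \<Longrightarrow> a*b \<le> t*a^2 + b^2/(4*t)"
proof -
  assume t: "0 < t"
  have "0 \<le> (2*t*a - b)^2/(4*t)" using t by simp
  also have "(2*t*a - b)^2/(4*t) = t*a^2 + b^2/(4*t) - a*b"
    using t by (simp add: field_simps power2_eq_square)
  finally show ?thesis by simp
qed

lemma local_ineq:
  fixes C LC LV RL aC bC cC aV bV cV D e1 e2 w1 w2 w3 w4 w5 :: real
  assumes pos: "0<C" "0<LC" "0<LV" "0<RL" "0<aC" "0<bC" "0<cC" "0<aV" "0<bV" "0<cV"
    and Dpos: "0 \<le> D" and De: "0 < aV*bV - cV*LV"
    and e1: "0 < e1" "e1 \<le> 1" "e1 * (8*LC/(bC/aC)) \<le> 1"
       "e1 * ((4*RL*aC^2 + 4*bC^2/(bC/aC))/cC) \<le> 1"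
    and e2: "0 < e2" "e2 \<le> 1" "e2 * (4/(bC/aC) + 4/RL + 4*RL*(C*bV/LV)^2 + D) \<le> 1"
       "e2 * (8*RL*(C*aV/LV)) \<le> 1"
       "e2 * ((aV*bV - cV*LV)/(4*(bV^2+1))) \<le> 1"
       "e2 * (32*RL*(C*cV/LV)^2*(bV^2+1)/cV^2) \<le> 1"
  shows "-(w1^2)/RL - (bC/aC)*w2^2 - (bV*w4 - cV*w5)^2/(aV*bV - cV*LV)
          + e1*(aC*w1*w3 + bC*w2*w3 - cC*w3^2 + LC*w2^2)
          + e2*(-(w4*w2) - w4^2 + w1*w4/RL + (C*aV/LV)*w1^2 + (C*bV/LV)*w1*w4 - (C*cV/LV)*w1*w5)
          + D*e2^2/2*w4^2
        \<le> - (3/(8*RL))*w1^2 - (5*(bC/aC)/8)*w2^2 - (e1*cC/2)*w3^2 - (e2/4)*w4^2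
           - (e2*cV^2/(8*(bV^2+1))/2)*w5^2"
proof -
  define \<beta> where "\<beta> = bC/aC"
  define \<Delta> where "\<Delta> = aV*bV - cV*LV"
  define K1 where "K1 = C*aV/LV"
  define K2 where "K2 = C*bV/LV"
  define K3 where "K3 = C*cV/LV"
  define B where "B = bV^2+1"
  have b1: "0 < B" unfolding B_def by (metis add_pos_nonneg zero_less_one zero_le_power2 add.commute)
  define \<kappa> where "\<kappa> = e2*cV^2/(8*B)"
  define qq where "qq = bV*w4 - cV*w5"
  have bpos: "0 < \<beta>" unfolding \<beta>_def using pos by simp
  have Dp: "0 < \<Delta>" using De \<Delta>_def by simp
  note e1' = e1[folded \<beta>_def]
  note e2' = e2[folded \<beta>_def \<Delta>_def K1_def K2_def K3_def B_def]
  have A: "e1*aC*w1*w3 \<le> 1/(8*RL)*w1^2 + 2*RL*e1^2*aC^2*w3^2"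
    using ab_le[of "1/(8*RL)" w1 "e1*aC*w3"] pos by (simp add: field_simps power2_eq_square mult.commute)
  have B: "e1*bC*w2*w3 \<le> \<beta>/8*w2^2 + 2*e1^2*bC^2/\<beta>*w3^2"
    using ab_le[of "\<beta>/8" w2 "e1*bC*w3"] bpos by (simp add: field_simps power2_eq_square mult.commute)
  have Cc: "e1*LC*w2^2 \<le> \<beta>/8*w2^2"
  proof -
    have "e1*LC \<le> \<beta>/8" using e1'(3) bpos pos by (simp add: field_simps)
    then show ?thesis by (rule mult_right_mono) simp_all
  qed
  have Z: "2*RL*e1^2*aC^2 + 2*e1^2*bC^2/\<beta> \<le> e1*cC/2"
  proof -
    have "e1*(4*RL*aC^2 + 4*bC^2/\<beta>) \<le> cC" using e1'(4) pos by (simp add: field_simps)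
    hence "e1/2*(e1*(4*RL*aC^2 + 4*bC^2/\<beta>)) \<le> e1/2*cC" using e1 by (simp add: mult_left_mono)
    moreover have "2*RL*e1^2*aC^2 + 2*e1^2*bC^2/\<beta> = e1/2*(e1*(4*RL*aC^2 + 4*bC^2/\<beta>))"
      by (simp add: field_simps power2_eq_square)
    moreover have "e1/2*cC = e1*cC/2" by simp
    ultimately show ?thesis by linarith
  qed
  have Z2: "(2*RL*e1^2*aC^2 + 2*e1^2*bC^2/\<beta>)*w3^2 \<le> e1*cC/2*w3^2"
    using Z by (rule mult_right_mono) simp_all
  have Dd: "-(e2*w4*w2) \<le> \<beta>/8*w2^2 + 2*e2^2/\<beta>*w4^2"
    using ab_le[of "\<beta>/8" w2 "-(e2*w4)"] bpos by (simp add: field_simps power2_eq_square mult.commute)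
  have Ee: "e2*w1*w4/RL \<le> 1/(8*RL)*w1^2 + 2*e2^2/RL*w4^2"
    using ab_le[of "1/(8*RL)" w1 "e2*w4/RL"] pos by (simp add: field_simps power2_eq_square mult.commute)
  have Ff: "e2*K1*w1^2 \<le> 1/(8*RL)*w1^2"
  proof -
    have "e2*K1 \<le> 1/(8*RL)" using e2'(4) pos by (simp add: field_simps)
    then show ?thesis by (rule mult_right_mono) simp_all
  qed
  have Gg: "e2*K2*w1*w4 \<le> 1/(8*RL)*w1^2 + 2*RL*e2^2*K2^2*w4^2"
    using ab_le[of "1/(8*RL)" w1 "e2*K2*w4"] pos by (simp add: field_simps power2_eq_square mult.commute)
  have Hh: "-(e2*K3*w1*w5) \<le> 1/(8*RL)*w1^2 + 2*RL*e2^2*K3^2*w5^2"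
    using ab_le[of "1/(8*RL)" w1 "-(e2*K3*w5)"] pos by (simp add: field_simps power2_eq_square mult.commute)
  have I: "(2*e2^2/\<beta> + 2*e2^2/RL + 2*RL*e2^2*K2^2 + D*e2^2/2)*w4^2 \<le> e2/2*w4^2"
  proof -
    have "e2*(4/\<beta> + 4/RL + 4*RL*K2^2 + D) \<le> 1" using e2'(3) .
    hence "e2/2*(e2*(4/\<beta> + 4/RL + 4*RL*K2^2 + D)) \<le> e2/2" using e2 by (simp add: mult_left_mono)
    moreover have "2*e2^2/\<beta> + 2*e2^2/RL + 2*RL*e2^2*K2^2 + D*e2^2/2 = e2/2*(e2*(4/\<beta> + 4/RL + 4*RL*K2^2 + D))"
      by (simp add: field_simps power2_eq_square)
    ultimately have "2*e2^2/\<beta> + 2*e2^2/RL + 2*RL*e2^2*K2^2 + D*e2^2/2 \<le> e2/2" by linarith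
    thus ?thesis by (rule mult_right_mono) simp_all
  qed
  have Y1: "cV^2*w5^2 \<le> 2*qq^2 + 2*bV^2*w4^2"
  proof -
    have "cV*w5 = bV*w4 - qq" unfolding qq_def by simp
    hence "cV^2*w5^2 = (bV*w4 - qq)^2" by (simp add: power_mult_distrib[symmetric])
    moreover have "(bV*w4 - qq)^2 \<le> 2*qq^2 + 2*bV^2*w4^2"
    proof -
      have "(bV*w4 - qq)^2 = 2*qq^2 + 2*bV^2*w4^2 - (bV*w4+qq)^2" by (simp add: power2_eq_square algebra_simps)
      thus ?thesis using zero_le_power2[of "bV*w4+qq"] by linarith
    qed
    ultimately show ?thesis by simp
  qed
  have kpos: "0 < \<kappa>" unfolding \<kappa>_def using e2 pos b1 by simp
  have Y2: "\<kappa>*w5^2 \<le> qq^2/\<Delta> + e2/4*w4^2"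
  proof -
    have "\<kappa>*w5^2 = e2/(8*(B))*(cV^2*w5^2)" unfolding \<kappa>_def by (simp add: field_simps)
    also have "\<dots> \<le> e2/(8*(B))*(2*qq^2 + 2*bV^2*w4^2)"
      using Y1 e2 b1 by (intro mult_left_mono) auto
    also have "\<dots> = e2/(4*(B))*qq^2 + (e2/4)*(bV^2/(B))*w4^2"
      using b1 by (simp add: field_simps)
    also have "\<dots> \<le> qq^2/\<Delta> + e2/4*w4^2"
    proof -
      have "e2/(4*(B)) \<le> 1/\<Delta>" using e2'(5) Dp b1 by (simp add: field_simps)
      hence 1: "e2/(4*(B))*qq^2 \<le> 1/\<Delta>*qq^2" by (rule mult_right_mono) simp_all
      have "bV^2/(B) \<le> 1" using b1 by (simp add: B_def)
      hence "(e2/4)*(bV^2/(B)) \<le> e2/4" using e2(1) by (intro mult_left_le) simp_all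
      hence 2: "(e2/4)*(bV^2/(B))*w4^2 \<le> e2/4*w4^2" by (rule mult_right_mono) simp_all
      have "1/\<Delta>*qq^2 = qq^2/\<Delta>" by simp
      then show ?thesis using 1 2 by linarith
    qed
    finally show ?thesis .
  qed
  have Y3: "2*RL*e2^2*K3^2*w5^2 \<le> \<kappa>/2*w5^2"
  proof -
    have "e2*(32*RL*K3^2*(B)/cV^2) \<le> 1" using e2'(6) .
    hence "e2*(e2*(32*RL*K3^2*(B)/cV^2)) \<le> e2" using e2(1) by (intro mult_left_le) simp_all
    moreover have "e2*(e2*(32*RL*K3^2*(B)/cV^2)) * (cV^2/(16*(B))) = 2*RL*e2^2*K3^2"
      using b1 pos by (simp add: field_simps power2_eq_square)
    moreover have "e2 * (cV^2/(16*(B))) = \<kappa>/2" unfolding \<kappa>_def by (simp add: field_simps)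
    moreover have "0 \<le> cV^2/(16*(B))" using b1 by simp
    ultimately have "2*RL*e2^2*K3^2 \<le> \<kappa>/2" by (metis mult_right_mono)
    thus ?thesis by (rule mult_right_mono) simp_all
  qed
  have goal: "-(w1^2)/RL - \<beta>*w2^2 - qq^2/\<Delta>
          + (e1*aC*w1*w3 + e1*bC*w2*w3 - e1*cC*w3^2 + e1*LC*w2^2)
          + (-(e2*w4*w2) - e2*w4^2 + e2*w1*w4/RL + e2*K1*w1^2 + e2*K2*w1*w4 - e2*K3*w1*w5)
          + D*e2^2/2*w4^2
        \<le> - (3/(8*RL))*w1^2 - (5*\<beta>/8)*w2^2 - (e1*cC/2)*w3^2 - (e2/4)*w4^2 - (\<kappa>/2)*w5^2"
    using A B Cc Z2 Dd Ee Ff Gg Hh I Y2 Y3 by (simp add: algebra_simps)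
  show ?thesis using goal unfolding \<beta>_def \<Delta>_def K1_def K2_def K3_def \<kappa>_def qq_def B_def
    by (simp add: algebra_simps)
qed

lemma dS_eq:
  fixes C LC LV RL aC bC cC aV bV cV e1 e2 w1 w2 w3 w4 w5 u :: real
  assumes pos: "0<C" "0<LC" "0<LV" "0<RL" "0<aC" and De: "0 < aV*bV - cV*LV"
  defines "h1 \<equiv> (w2 + w4 - w1/RL + u)/C"
    and "h2 \<equiv> (-(aC*w1) - bC*w2 + cC*w3)/LC"
    and "h3 \<equiv> -w2"
    and "h4 \<equiv> (-(aV*w1) - bV*w4 + cV*w5)/LV"
    and "h5 \<equiv> -w1"
  shows "C*w1*h1 + (LC*w2*h2 + cC*w3*h3)/aC
          + (bV*LV*w4*h4 - cV*LV*(h4*w5 + w4*h5) + cV*aV*w5*h5)/(aV*bV - cV*LV)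
          - e1*LC*(h2*w3 + w2*h3) - e2*C*(h1*w4 + w1*h4)
       = -(w1^2)/RL - (bC/aC)*w2^2 - (bV*w4 - cV*w5)^2/(aV*bV - cV*LV)
          + e1*(aC*w1*w3 + bC*w2*w3 - cC*w3^2 + LC*w2^2)
          + e2*(-(w4*w2) - w4^2 + w1*w4/RL + (C*aV/LV)*w1^2 + (C*bV/LV)*w1*w4 - (C*cV/LV)*w1*w5)
          + (w1 - e2*w4)*u"
proof -
  have "aV*bV - cV*LV \<noteq> 0" using De by simp
  then show ?thesis using pos unfolding h1_def h2_def h3_def h4_def h5_def
    by (simp add: field_simps power2_eq_square)
qed

lemma S_lower:
  fixes C LC LV aC cC aV bV cV e1 e2 w1 w2 w3 w4 w5 :: real
  assumes pos: "0<C" "0<LC" "0<LV" "0<aC" "0<cC" "0<aV" "0<bV" "0<cV"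
    and De: "0 < aV*bV - cV*LV"
    and e1: "0 < e1" "e1 \<le> 1" "e1*(4*LC*aC^2/cC) \<le> 1"
    and e2: "0 < e2" "e2 \<le> 1" "e2*(2*C/(LV/(4*aV))) \<le> 1"
  shows "C/4*w1^2 + LC/(4*aC)*w2^2 + cC/(4*aC)*w3^2 + (LV/(4*aV))/2*w4^2
           + cV*aV/(2*(aV*bV+LV*cV))*w5^2
         \<le> C*w1^2/2 + (LC*w2^2 + cC*w3^2)/(2*aC)
           + (bV*LV*w4^2/2 - cV*LV*w4*w5 + cV*aV*w5^2/2)/(aV*bV - cV*LV)
           - e1*LC*w2*w3 - e2*C*w1*w4"
proof -
  define \<Delta> where "\<Delta> = aV*bV - cV*LV"
  have Dp: "0 < \<Delta>" using De \<Delta>_def by simp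
  have P1: "(e1*LC*w3)*w2 \<le> LC/(4*aC)*w2^2 + e1^2*LC*aC*w3^2"
    using ab_le[of "LC/(4*aC)" w2 "(e1*LC*w3)"] pos by (simp add: field_simps power2_eq_square)
  have P1': "e1^2*LC*aC*w3^2 \<le> cC/(4*aC)*w3^2"
  proof -
    have "e1*(4*LC*aC^2) \<le> cC" using e1(3) pos by (simp add: field_simps)
    hence "e1*(e1*(4*LC*aC^2)) \<le> e1*cC" using e1(1) by (intro mult_left_mono) auto
    also have "\<dots> \<le> cC" using e1(1,2) pos by (intro mult_left_le_one_le) auto
    finally have "e1*(e1*(4*LC*aC^2)) \<le> cC" .
    hence "e1^2*LC*aC \<le> cC/(4*aC)" using pos by (simp add: field_simps power2_eq_square)
    thus ?thesis by (rule mult_right_mono) simp_all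
  qed
  have P2: "(e2*C*w4)*w1 \<le> C/4*w1^2 + e2^2*C*w4^2"
    using ab_le[of "C/4" w1 "(e2*C*w4)"] pos by (simp add: field_simps power2_eq_square)
  have P2': "e2^2*C*w4^2 \<le> (LV/(4*aV))/2*w4^2"
  proof -
    have "e2*C \<le> (LV/(4*aV))/2" using e2(3) pos by (simp add: field_simps)
    moreover have "e2*(e2*C) \<le> e2*C" using e2 pos by (intro mult_left_le_one_le) auto
    ultimately have "e2^2*C \<le> (LV/(4*aV))/2" by (simp add: power2_eq_square mult.assoc)
    thus ?thesis by (rule mult_right_mono) simp_all
  qed
  define t where "t = LV*(bV*aV + LV*cV)/(4*aV)"
  have tp: "0 < t" unfolding t_def using pos by (simp add: add_pos_pos)
  have P3: "(cV*LV*w5)*w4 \<le> t*w4^2 + (cV*LV*w5)^2/(4*t)"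
    using ab_le[of t w4 "cV*LV*w5"] tp by (simp add: mult.commute)
  have SV: "\<Delta>*((LV/(4*aV))*w4^2 + cV*aV/(2*(aV*bV+LV*cV))*w5^2)
         \<le> bV*LV*w4^2/2 - cV*LV*w4*w5 + cV*aV*w5^2/2"
  proof -
    define Q where "Q = aV*bV+LV*cV"
    have q: "0 < Q" unfolding Q_def using pos by (simp add: add_pos_pos)
    have hQ: "aV*bV = Q - LV*cV" unfolding Q_def by simp
    have tQ: "t = LV*Q/(4*aV)" unfolding t_def Q_def by (simp add: mult.commute)
    have c4: "bV*LV/2 - \<Delta>*(LV/(4*aV)) = t"
      unfolding tQ \<Delta>_def using pos q by (simp add: field_simps hQ)
    have c5: "cV*aV/2 - \<Delta>*(cV*aV/(2*Q)) = cV^2*LV^2/(4*t)"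
      unfolding tQ \<Delta>_def using pos q by (simp add: field_simps hQ power2_eq_square)
    have e1': "bV*LV*w4^2/2 - cV*LV*w4*w5 + cV*aV*w5^2/2 - \<Delta>*((LV/(4*aV))*w4^2 + cV*aV/(2*Q)*w5^2)
       = (bV*LV/2 - \<Delta>*(LV/(4*aV)))*w4^2 + (cV*aV/2 - \<Delta>*(cV*aV/(2*Q)))*w5^2 - cV*LV*w4*w5"
      by (simp add: algebra_simps)
    have e2': "t*w4^2 + (cV*LV*w5)^2/(4*t) - (cV*LV*w5)*w4 = t*w4^2 + (cV^2*LV^2/(4*t))*w5^2 - cV*LV*w4*w5"
      by (simp add: power_mult_distrib algebra_simps)
    have e: "bV*LV*w4^2/2 - cV*LV*w4*w5 + cV*aV*w5^2/2 - \<Delta>*((LV/(4*aV))*w4^2 + cV*aV/(2*(aV*bV+LV*cV))*w5^2)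
           = t*w4^2 + (cV*LV*w5)^2/(4*t) - (cV*LV*w5)*w4"
      using e1'[unfolded c4 c5] e2'[symmetric] unfolding Q_def by simp
    show ?thesis using e P3 by linarith
  qed
  have SV': "(LV/(4*aV))*w4^2 + cV*aV/(2*(aV*bV+LV*cV))*w5^2
         \<le> (bV*LV*w4^2/2 - cV*LV*w4*w5 + cV*aV*w5^2/2)/\<Delta>"
    using SV Dp by (simp add: field_simps)
  have eqs: "C*w1^2/2 + (LC*w2^2 + cC*w3^2)/(2*aC) = C/2*w1^2 + LC/(2*aC)*w2^2 + cC/(2*aC)*w3^2"
    using pos by (simp add: field_simps)
  have eqs2: "C/4*w1^2 = C/2*w1^2 - C/4*w1^2" "LC/(4*aC)*w2^2 = LC/(2*aC)*w2^2 - LC/(4*aC)*w2^2"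
     "cC/(4*aC)*w3^2 = cC/(2*aC)*w3^2 - cC/(4*aC)*w3^2"
     "(LV/(4*aV))/2*w4^2 = (LV/(4*aV))*w4^2 - (LV/(4*aV))/2*w4^2"
    by (simp_all add: field_simps)
  have m: "(e1*LC*w3)*w2 = (e1*LC*w2*w3)" "(e2*C*w4)*w1 = (e2*C*w1*w4)" by simp_all
  show ?thesis using P1 P1' P2 P2' SV' eqs eqs2 m unfolding \<Delta>_def by linarith
qed

lemma S_upper:
  fixes C LC LV aC cC aV bV cV e1 e2 w1 w2 w3 w4 w5 :: real
  assumes pos: "0<C" "0<LC" "0<LV" "0<aC" "0<cC" "0<aV" "0<bV" "0<cV"
    and De: "0 < aV*bV - cV*LV"
    and e1: "0 < e1" and e2: "0 < e2"
  shows "C*w1^2/2 + (LC*w2^2 + cC*w3^2)/(2*aC)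
           + (bV*LV*w4^2/2 - cV*LV*w4*w5 + cV*aV*w5^2/2)/(aV*bV - cV*LV)
           - e1*LC*w2*w3 - e2*C*w1*w4
         \<le> ((C/2 + e2*C/2) + (LC/(2*aC) + e1*LC/2) + (cC/(2*aC) + e1*LC/2)
             + ((bV*LV/2 + cV*LV/2)/(aV*bV - cV*LV) + e2*C/2)
             + ((cV*LV/2 + cV*aV/2)/(aV*bV - cV*LV))) * (w1^2+w2^2+w3^2+w4^2+w5^2)"
proof -
  define \<Delta> where "\<Delta> = aV*bV - cV*LV"
  have Dp: "0 < \<Delta>" using De \<Delta>_def by simp
  have sq: "\<And>a b::real. -(a*b) \<le> a^2/2 + b^2/2"
  proof -
    fix a b :: real
    have "0 \<le> (a+b)^2/2" by simp
    thus "-(a*b) \<le> a^2/2 + b^2/2" by (simp add: power2_eq_square algebra_simps)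
  qed
  have q1: "-(w2*w3) \<le> w2^2/2 + w3^2/2" by (rule sq)
  have q1': "-(e1*LC*w2*w3) \<le> e1*LC*(w2^2/2 + w3^2/2)"
    using mult_left_mono[OF q1, of "e1*LC"] e1 pos by (simp add: algebra_simps)
  have q2: "-(w1*w4) \<le> w1^2/2 + w4^2/2" by (rule sq)
  have q2': "-(e2*C*w1*w4) \<le> e2*C*(w1^2/2 + w4^2/2)"
    using mult_left_mono[OF q2, of "e2*C"] e2 pos by (simp add: algebra_simps)
  have q3: "-(w4*w5) \<le> w4^2/2 + w5^2/2" by (rule sq)
  have q3': "-(cV*LV*w4*w5) \<le> cV*LV*(w4^2/2 + w5^2/2)"
    using mult_left_mono[OF q3, of "cV*LV"] pos by (simp add: algebra_simps)
  have q3'': "(bV*LV*w4^2/2 - cV*LV*w4*w5 + cV*aV*w5^2/2)/\<Delta>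
      \<le> (bV*LV/2 + cV*LV/2)/\<Delta>*w4^2 + (cV*LV/2 + cV*aV/2)/\<Delta>*w5^2"
  proof -
    have "bV*LV*w4^2/2 - cV*LV*w4*w5 + cV*aV*w5^2/2 \<le> (bV*LV/2 + cV*LV/2)*w4^2 + (cV*LV/2 + cV*aV/2)*w5^2"
      using q3' by (simp add: algebra_simps)
    hence "(bV*LV*w4^2/2 - cV*LV*w4*w5 + cV*aV*w5^2/2)/\<Delta> \<le> ((bV*LV/2 + cV*LV/2)*w4^2 + (cV*LV/2 + cV*aV/2)*w5^2)/\<Delta>"
      using Dp by (simp add: divide_right_mono)
    moreover have "((bV*LV/2 + cV*LV/2)*w4^2 + (cV*LV/2 + cV*aV/2)*w5^2)/\<Delta> = (bV*LV/2 + cV*LV/2)/\<Delta>*w4^2 + (cV*LV/2 + cV*aV/2)/\<Delta>*w5^2"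
      using Dp by (simp add: field_simps)
    ultimately show ?thesis by linarith
  qed
  define c1 where "c1 = C/2 + e2*C/2"
  define c2 where "c2 = LC/(2*aC) + e1*LC/2"
  define c3 where "c3 = cC/(2*aC) + e1*LC/2"
  define c4 where "c4 = (bV*LV/2 + cV*LV/2)/\<Delta> + e2*C/2"
  define c5 where "c5 = (cV*LV/2 + cV*aV/2)/\<Delta>"
  have cp: "0 \<le> c1" "0 \<le> c2" "0 \<le> c3" "0 \<le> c4" "0 \<le> c5"
    unfolding c1_def c2_def c3_def c4_def c5_def using pos e1 e2 Dp by (simp_all add: add_nonneg_nonneg)
  have L: "C*w1^2/2 + (LC*w2^2 + cC*w3^2)/(2*aC)
           + (bV*LV*w4^2/2 - cV*LV*w4*w5 + cV*aV*w5^2/2)/\<Delta>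
           - e1*LC*w2*w3 - e2*C*w1*w4 \<le> c1*w1^2 + c2*w2^2 + c3*w3^2 + c4*w4^2 + c5*w5^2"
  proof -
    have "C*w1^2/2 + (LC*w2^2 + cC*w3^2)/(2*aC) = C/2*w1^2 + LC/(2*aC)*w2^2 + cC/(2*aC)*w3^2"
      using pos by (simp add: field_simps)
    moreover have "c1*w1^2 + c2*w2^2 + c3*w3^2 + c4*w4^2 + c5*w5^2 =
       C/2*w1^2 + LC/(2*aC)*w2^2 + cC/(2*aC)*w3^2 + (bV*LV/2 + cV*LV/2)/\<Delta>*w4^2 + (cV*LV/2 + cV*aV/2)/\<Delta>*w5^2
       + e1*LC*(w2^2/2 + w3^2/2) + e2*C*(w1^2/2 + w4^2/2)"
      unfolding c1_def c2_def c3_def c4_def c5_def by (simp add: algebra_simps)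
    ultimately show ?thesis using q1' q2' q3'' by linarith
  qed
  have R: "c1*w1^2 + c2*w2^2 + c3*w3^2 + c4*w4^2 + c5*w5^2 \<le> (c1+c2+c3+c4+c5)*(w1^2+w2^2+w3^2+w4^2+w5^2)"
  proof -
    have "(c1+c2+c3+c4+c5)*(w1^2+w2^2+w3^2+w4^2+w5^2) - (c1*w1^2 + c2*w2^2 + c3*w3^2 + c4*w4^2 + c5*w5^2)
      = c1*(w2^2+w3^2+w4^2+w5^2) + c2*(w1^2+w3^2+w4^2+w5^2) + c3*(w1^2+w2^2+w4^2+w5^2)
        + c4*(w1^2+w2^2+w3^2+w5^2) + c5*(w1^2+w2^2+w3^2+w4^2)" by (simp add: algebra_simps)
    moreover have "0 \<le> \<dots>" using cp by (intro add_nonneg_nonneg mult_nonneg_nonneg) simp_all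
    ultimately show ?thesis by linarith
  qed
  show ?thesis using L R unfolding c1_def c2_def c3_def c4_def c5_def \<Delta>_def by linarith
qed

lemma lyap_stable:
  fixes f :: "'a::real_normed_vector \<Rightarrow> 'a" and V :: "'a \<Rightarrow> real" and dV :: "'a \<Rightarrow> 'a \<Rightarrow> real"
  assumes f0: "f 0 = 0" and mpos: "0 < m" and Mpos: "0 < M" and wpos: "0 < w"
    and Vlo: "\<And>x. m * (norm x)^2 \<le> V x" and Vhi: "\<And>x. V x \<le> M * (norm x)^2"
    and dVneg: "\<And>x. dV x (f x) \<le> - w * (norm x)^2"
    and chain: "\<And>g g' t T. (g has_vector_derivative g') (at t within T) \<Longrightarrow>
                  ((\<lambda>s. V (g s)) has_real_derivative dV (g t) g') (at t within T)"
  shows "asymptotically_stable_origin f"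
proof -
  define k where "k = w / M"
  have kpos: "0 < k" unfolding k_def using wpos Mpos by simp
  have bound: "m * (norm (x t))^2 \<le> exp (- k * t) * (M * (norm (x 0))^2)"
    if sol: "is_solution f x" and t: "0 \<le> t" for x t
  proof -
    define \<phi> where "\<phi> s = exp (k * s) * V (x s)" for s
    have der: "(\<phi> has_real_derivative exp (k * s) * (k * V (x s) + dV (x s) (f (x s)))) (at s within {0..})"
      if "0 \<le> s" for s
    proof -
      have "(x has_vector_derivative f (x s)) (at s within {0..})" using sol that unfolding is_solution_def by blast
      from chain[OF this] have "((\<lambda>s. V (x s)) has_real_derivative dV (x s) (f (x s))) (at s within {0..})" .
      then show ?thesis unfolding \<phi>_def
        by (auto intro!: derivative_eq_intros simp: algebra_simps)
    qed
    have nonpos: "exp (k * s) * (k * V (x s) + dV (x s) (f (x s))) \<le> 0" for s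
    proof -
      have "k * V (x s) \<le> k * (M * (norm (x s))^2)" using Vhi kpos by (simp add: mult_left_mono)
      also have "\<dots> = w * (norm (x s))^2" unfolding k_def using Mpos by simp
      finally have "k * V (x s) + dV (x s) (f (x s)) \<le> 0" using dVneg[of "x s"] by linarith
      then show ?thesis by (simp add: mult_nonneg_nonpos)
    qed
    have "\<phi> t \<le> \<phi> 0"
    proof (rule DERIV_nonpos_imp_decreasing_open[OF t])
      fix s assume s: "0 < s" "s < t"
      have "(\<phi> has_real_derivative exp (k * s) * (k * V (x s) + dV (x s) (f (x s)))) (at s within {0<..})"
        using der[of s] s by (auto intro: DERIV_subset)
      then have "(\<phi> has_real_derivative exp (k * s) * (k * V (x s) + dV (x s) (f (x s)))) (at s)"
        using s at_within_open[of s "{0<..}"] by simp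
      then show "\<exists>y. (\<phi> has_real_derivative y) (at s) \<and> y \<le> 0" using nonpos by blast
    next
      show "continuous_on {0..t} \<phi>"
        unfolding continuous_on_eq_continuous_within
      proof
        fix s assume "s \<in> {0..t}"
        then have "continuous (at s within {0..}) \<phi>" using der[of s] DERIV_continuous by auto
        then show "continuous (at s within {0..t}) \<phi>" by (rule continuous_within_subset) auto
      qed
    qed
    then have "exp (k*t) * V (x t) \<le> V (x 0)" unfolding \<phi>_def by simp
    then have "V (x t) \<le> exp (- k * t) * V (x 0)"
      by (simp add: exp_minus field_simps)
    also have "\<dots> \<le> exp (- k * t) * (M * (norm (x 0))^2)" using Vhi by (simp add: mult_left_mono)
    finally show ?thesis using Vlo[of "x t"] by linarith
  qed
  have bound2: "norm (x t) \<le> sqrt (M/m) * exp (- k * t / 2) * norm (x 0)"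
    if sol: "is_solution f x" and t: "0 \<le> t" for x t
  proof -
    have "(norm (x t))^2 \<le> (M/m) * exp (- k * t) * (norm (x 0))^2"
      using bound[OF sol t] mpos by (simp add: field_simps)
    also have "\<dots> = (sqrt (M/m) * exp (- k * t / 2) * norm (x 0))^2"
      using mpos Mpos by (simp add: power_mult_distrib exp_double[symmetric] power2_eq_square[of "exp _"] mult_exp_exp)
    finally show ?thesis
      by (rule power2_le_imp_le) (use mpos Mpos in simp)
  qed
  show ?thesis unfolding asymptotically_stable_origin_def
  proof (intro conjI allI impI)
    show "f 0 = 0" by (rule f0)
  next
    fix \<epsilon> :: real assume e: "0 < \<epsilon>"
    define \<delta> where "\<delta> = \<epsilon> / sqrt (M/m)"
    have sp: "0 < sqrt (M/m)" using mpos Mpos by simp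
    show "\<exists>\<delta>>0. \<forall>x. is_solution f x \<and> norm (x 0) < \<delta> \<longrightarrow> (\<forall>t\<ge>0. norm (x t) < \<epsilon>)"
    proof (intro exI conjI allI impI)
      show "0 < \<delta>" unfolding \<delta>_def using e sp by simp
      fix x and t :: real assume H: "is_solution f x \<and> norm (x 0) < \<delta>" and t: "0 \<le> t"
      have "norm (x t) \<le> sqrt (M/m) * exp (- k * t / 2) * norm (x 0)" using bound2 H t by blast
      also have "\<dots> \<le> sqrt (M/m) * norm (x 0)"
      proof -
        have "exp (- k * t / 2) \<le> 1" using kpos t by simp
        then have "exp (- k * t / 2) * norm (x 0) \<le> 1 * norm (x 0)" by (intro mult_right_mono) simp_all
        then show ?thesis using sp by (simp add: mult.assoc)
      qed
      also have "\<dots> < sqrt (M/m) * \<delta>" using H sp by simp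
      also have "\<dots> = \<epsilon>" unfolding \<delta>_def using sp mpos Mpos by simp
      finally show "norm (x t) < \<epsilon>" .
    qed
  next
    show "\<exists>\<delta>>0. \<forall>x. is_solution f x \<and> norm (x 0) < \<delta> \<longrightarrow> (x \<longlongrightarrow> 0) at_top"
    proof (intro exI conjI allI impI)
      show "(0::real) < 1" by simp
      fix x assume H: "is_solution f x \<and> norm (x 0) < 1"
      have lim: "((\<lambda>t. sqrt (M/m) * exp (- k * t / 2) * norm (x 0)) \<longlongrightarrow> 0) at_top"
      proof -
        have "filterlim (\<lambda>t::real. (-(k/2)) * t) at_bot at_top"
          by (rule filterlim_tendsto_neg_mult_at_bot[OF tendsto_const]) (use kpos in \<open>auto intro: filterlim_ident\<close>)
        then have "filterlim (\<lambda>t::real. - k * t / 2) at_bot at_top" by (simp add: algebra_simps)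
        then have "((\<lambda>t. exp (- k * t / 2)) \<longlongrightarrow> 0) at_top"
          by (rule filterlim_compose[OF exp_at_bot])
        from tendsto_mult[OF tendsto_const[of "sqrt (M/m)"] tendsto_mult[OF this tendsto_const[of "norm (x 0)"]]]
        show ?thesis by (simp add: mult.assoc)
      qed
      show "(x \<longlongrightarrow> 0) at_top"
      proof (rule tendsto_0_le[OF lim, of _ 1])
        show "\<forall>\<^sub>F t in at_top. norm (x t) \<le> norm (sqrt (M/m) * exp (- k * t / 2) * norm (x 0)) * 1"
          using eventually_ge_at_top[of 0]
        proof eventually_elim
          case (elim t)
          then show ?case using bound2[of x t] H by simp
        qed
      qed
    qed
  qed
qed

lemma exhaust_5:
  fixes x :: 5
  shows "x = 1 \<or> x = 2 \<or> x = 3 \<or> x = 4 \<or> x = 5"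
proof (induct x)
  case (of_int z)
  then have "z = 0 \<or> z = 1 \<or> z = 2 \<or> z = 3 \<or> z = 4" by fastforce
  then show ?case by auto
qed

lemma UNIV_5: "UNIV = {1, 2, 3, 4, 5::5}"
  using exhaust_5 by auto

lemma sum_5: "sum f (UNIV::5 set) = f 1 + f 2 + f 3 + f 4 + f 5"
  unfolding UNIV_5 by (simp add: ac_simps)

lemma vector_5 [simp]:
 "(vector [a,b,c,d,e] ::('a::zero)^5)$1 = a"
 "(vector [a,b,c,d,e] ::('a::zero)^5)$2 = b"
 "(vector [a,b,c,d,e] ::('a::zero)^5)$3 = c"
 "(vector [a,b,c,d,e] ::('a::zero)^5)$4 = d"
 "(vector [a,b,c,d,e] ::('a::zero)^5)$5 = e"
  unfolding vector_def by simp_all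

lemma E11_mv: "(E11 *v w)$1 = w$1" "(E11 *v w)$2 = 0" "(E11 *v w)$3 = 0" "(E11 *v w)$4 = 0" "(E11 *v w)$5 = 0"
  by (simp_all add: E11_def matrix_vector_mult_def sum_5)

lemma Floc_mv:
  "(Floc Ct LC RC LV RV kC1 kC2 kC3 kV1 kV2 kV3 *v w)$1 = w$2/Ct + w$4/Ct"
  "(Floc Ct LC RC LV RV kC1 kC2 kC3 kV1 kV2 kV3 *v w)$2 = (kC1 - 1)/LC * w$1 + (kC2 - RC)/LC * w$2 + kC3/LC * w$3"
  "(Floc Ct LC RC LV RV kC1 kC2 kC3 kV1 kV2 kV3 *v w)$3 = - w$2"
  "(Floc Ct LC RC LV RV kC1 kC2 kC3 kV1 kV2 kV3 *v w)$4 = (kV1 - 1)/LV * w$1 + (kV2 - RV)/LV * w$4 + kV3/LV * w$5"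
  "(Floc Ct LC RC LV RV kC1 kC2 kC3 kV1 kV2 kV3 *v w)$5 = - w$1"
  by (simp_all add: Floc_def matrix_vector_mult_def sum_5)


definition Sloc :: "real \<Rightarrow> real \<Rightarrow> real \<Rightarrow> real \<Rightarrow> real \<Rightarrow> real \<Rightarrow> real \<Rightarrow> real \<Rightarrow> real \<Rightarrow> real \<Rightarrow> real^5 \<Rightarrow> real" where
  "Sloc C LC LV aC cC aV bV cV e1 e2 w =
     C*(w$1)^2/2 + (LC*(w$2)^2 + cC*(w$3)^2)/(2*aC)
           + (bV*LV*(w$4)^2/2 - cV*LV*(w$4)*(w$5) + cV*aV*(w$5)^2/2)/(aV*bV - cV*LV)
           - e1*LC*(w$2)*(w$3) - e2*C*(w$1)*(w$4)"

definition dSloc :: "real \<Rightarrow> real \<Rightarrow> real \<Rightarrow> real \<Rightarrow> real \<Rightarrow> real \<Rightarrow> real \<Rightarrow> real \<Rightarrow> real \<Rightarrow> real \<Rightarrow> real^5 \<Rightarrow> real^5 \<Rightarrow> real" where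
  "dSloc C LC LV aC cC aV bV cV e1 e2 w h =
     C*(w$1)*(h$1) + (LC*(w$2)*(h$2) + cC*(w$3)*(h$3))/aC
          + (bV*LV*(w$4)*(h$4) - cV*LV*((h$4)*(w$5) + (w$4)*(h$5)) + cV*aV*(w$5)*(h$5))/(aV*bV - cV*LV)
          - e1*LC*((h$2)*(w$3) + (w$2)*(h$3)) - e2*C*((h$1)*(w$4) + (w$1)*(h$4))"

lemma comp_deriv:
  fixes g :: "real \<Rightarrow> real^5"
  assumes "(g has_vector_derivative g') (at t within T)"
  shows "((\<lambda>s. g s $ k) has_real_derivative g' $ k) (at t within T)"
  unfolding has_real_derivative_iff_has_vector_derivative
  using bounded_linear.has_vector_derivative[OF bounded_linear_vec_nth assms] .

lemma Sloc_deriv: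
  fixes g :: "real \<Rightarrow> real^5"
  assumes d: "(g has_vector_derivative g') (at t within T)"
    and nz: "aC \<noteq> 0" "aV*bV - cV*LV \<noteq> 0"
  shows "((\<lambda>s. Sloc C LC LV aC cC aV bV cV e1 e2 (g s)) has_real_derivative
            dSloc C LC LV aC cC aV bV cV e1 e2 (g t) g') (at t within T)"
proof -
  define Dl where "Dl = aV*bV - cV*LV"
  have Dlnz: "Dl \<noteq> 0" using nz Dl_def by simp
  define A1 where "A1 = C/2"
  define A2 where "A2 = LC/(2*aC)"
  define A3 where "A3 = cC/(2*aC)"
  define A4 where "A4 = bV*LV/2/Dl"
  define A45 where "A45 = cV*LV/Dl"
  define A5 where "A5 = cV*aV/2/Dl"
  define B23 where "B23 = e1*LC"
  define B14 where "B14 = e2*C"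
  have S: "\<And>w. Sloc C LC LV aC cC aV bV cV e1 e2 w = A1*(w$1)^2 + A2*(w$2)^2 + A3*(w$3)^2 + A4*(w$4)^2
      - A45*((w$4)*(w$5)) + A5*(w$5)^2 - B23*((w$2)*(w$3)) - B14*((w$1)*(w$4))"
    unfolding Sloc_def Dl_def[symmetric] A1_def A2_def A3_def A4_def A45_def A5_def B23_def B14_def
    using nz Dlnz by (simp add: field_simps)
  have dS: "\<And>w h. dSloc C LC LV aC cC aV bV cV e1 e2 w h = A1*(2*(w$1)*(h$1)) + A2*(2*(w$2)*(h$2)) + A3*(2*(w$3)*(h$3))
      + A4*(2*(w$4)*(h$4))
      - A45*((h$4)*(w$5) + (w$4)*(h$5)) + A5*(2*(w$5)*(h$5)) - B23*((h$2)*(w$3) + (w$2)*(h$3))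
      - B14*((h$1)*(w$4) + (w$1)*(h$4))"
    unfolding dSloc_def Dl_def[symmetric] A1_def A2_def A3_def A4_def A45_def A5_def B23_def B14_def
    using nz Dlnz by (simp add: field_simps)
  show ?thesis unfolding S dS
    by (auto intro!: derivative_eq_intros comp_deriv[OF d] simp: algebra_simps power2_eq_square)
qed

lemma V_deriv:
  fixes g :: "real \<Rightarrow> real^5^'n::finite" and P :: "'n \<Rightarrow> real^5 \<Rightarrow> real" 
  assumes d: "(g has_vector_derivative g') (at t within T)"
    and dP: "\<And>i (h::real\<Rightarrow>real^5) h'. (h has_vector_derivative h') (at t within T) \<Longrightarrow>
        ((\<lambda>s. P i (h s)) has_real_derivative dP i (h t) h') (at t within T)"
  shows "((\<lambda>s. \<Sum>i\<in>UNIV. P i (g s $ i)) has_real_derivative (\<Sum>i\<in>UNIV. dP i (g t $ i) (g' $ i))) (at t within T)"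
proof -
  have "\<And>i. ((\<lambda>s. g s $ i) has_vector_derivative g' $ i) (at t within T)"
    using bounded_linear.has_vector_derivative[OF bounded_linear_vec_nth d] .
  then have "\<And>i. ((\<lambda>s. P i (g s $ i)) has_vector_derivative dP i (g t $ i) (g' $ i)) (at t within T)"
    using dP unfolding has_real_derivative_iff_has_vector_derivative by blast
  then show ?thesis unfolding has_real_derivative_iff_has_vector_derivative
    by (rule has_vector_derivative_sum)
qed

lemma Fblock_comp:
  "(Fblock E R RL Ct Fl i j *v w) $ k =
     (if j = i then (Fl i *v w) $ k - (if k = 1 then (1 / (RL i * Ct i) + (\<Sum>k\<in>{k. E i k}. 1 / (R i k * Ct i))) * w$1 else 0)
      else if E i j \<and> k = 1 then (1 / (R i j * Ct i)) * w$1 else 0)"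
  by (auto simp: Fblock_def matrix_vector_mult_def E11_def sum_5 sum_subtractf algebra_simps
      matrix_vector_mult_diff_rdistrib)

lemma Fsys_comp:
  fixes E :: "'n::finite \<Rightarrow> 'n \<Rightarrow> bool"
  assumes irr: "\<not> E i i"
  shows "(Fsys E R RL Ct Fl x) $ i $ k = (Fl i *v x$i)$k +
     (if k = 1 then - (x$i$1)/(RL i * Ct i) + (\<Sum>j\<in>{j. E i j}. (x$j$1 - x$i$1)/(R i j * Ct i)) else 0)"
proof -
  have "(Fsys E R RL Ct Fl x) $ i $ k = (\<Sum>j\<in>UNIV. (Fblock E R RL Ct Fl i j *v x$j) $ k)"
    unfolding Fsys_def by simp
  also have "\<dots> = (Fblock E R RL Ct Fl i i *v x$i) $ k + (\<Sum>j\<in>UNIV-{i}. (Fblock E R RL Ct Fl i j *v x$j) $ k)"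
    by (simp add: sum.remove)
  also have "(\<Sum>j\<in>UNIV-{i}. (Fblock E R RL Ct Fl i j *v x$j) $ k)
      = (\<Sum>j\<in>UNIV-{i}. if E i j \<and> k = 1 then (1 / (R i j * Ct i)) * x$j$1 else 0)"
    by (rule sum.cong) (auto simp: Fblock_comp)
  also have "\<dots> = (if k = 1 then (\<Sum>j\<in>{j. E i j}. (1 / (R i j * Ct i)) * x$j$1) else 0)"
  proof -
    have "{j \<in> UNIV-{i}. E i j} = {j. E i j}" using irr by auto
    then show ?thesis by (auto simp: sum.inter_filter[symmetric])
  qed
  finally have 1: "(Fsys E R RL Ct Fl x) $ i $ k = (Fblock E R RL Ct Fl i i *v x$i) $ k +
     (if k = 1 then (\<Sum>j\<in>{j. E i j}. (1 / (R i j * Ct i)) * x$j$1) else 0)" .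
  have 2: "(\<Sum>j\<in>{j. E i j}. (x$j$1 - x$i$1)/(R i j * Ct i)) =
     (\<Sum>j\<in>{j. E i j}. (1 / (R i j * Ct i)) * x$j$1) - (\<Sum>k\<in>{k. E i k}. 1 / (R i k * Ct i)) * x$i$1"
    by (simp add: sum_subtractf sum_distrib_right diff_divide_distrib)
  show ?thesis unfolding 1 2 by (simp add: Fblock_comp algebra_simps)
qed

lemma coupling:
  fixes E :: "'n::finite \<Rightarrow> 'n \<Rightarrow> bool" and R :: "'n \<Rightarrow> 'n \<Rightarrow> real" and v y e :: "'n \<Rightarrow> real"
  assumes sym: "\<And>i j. E i j \<Longrightarrow> E j i" and Rsym: "\<And>i j. E i j \<Longrightarrow> R i j = R j i"
    and Rpos: "\<And>i j. E i j \<Longrightarrow> R i j > 0"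
  shows "(\<Sum>i\<in>UNIV. (v i - e i * y i) * (\<Sum>j\<in>{j. E i j}. (v j - v i)/R i j))
     \<le> (\<Sum>i\<in>UNIV. (\<Sum>j\<in>{j. E i j}. 1/R i j) * (e i)^2/2 * (y i)^2)"
proof -
  have pt: "(v i - e i*y i)*((v j - v i)/R i j) \<le> ((v j)^2/(2*R i j) - (v i)^2/(2*R i j)) + (e i)^2*(y i)^2/(2*R i j)"
    if E: "E i j" for i j
  proof -
    have r: "0 < R i j" using Rpos E .
    have "((v j)^2 - (v i)^2)/2 + (e i)^2*(y i)^2/2 - (v i - e i*y i)*(v j - v i) = (v j - v i + e i * y i)^2/2"
      by (simp add: power2_eq_square field_simps)
    hence "(v i - e i*y i)*(v j - v i) \<le> ((v j)^2 - (v i)^2)/2 + (e i)^2*(y i)^2/2"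
      using zero_le_power2[of "v j - v i + e i * y i"] by linarith
    hence "(v i - e i*y i)*(v j - v i)/R i j \<le> (((v j)^2 - (v i)^2)/2 + (e i)^2*(y i)^2/2)/R i j"
      using r by (simp add: divide_right_mono)
    moreover have "(v i - e i*y i)*((v j - v i)/R i j) = (v i - e i*y i)*(v j - v i)/R i j" by simp
    moreover have "(((v j)^2 - (v i)^2)/2 + (e i)^2*(y i)^2/2)/R i j
        = ((v j)^2/(2*R i j) - (v i)^2/(2*R i j)) + (e i)^2*(y i)^2/(2*R i j)"
      using r by (simp add: field_simps)
    ultimately show ?thesis by linarith
  qed
  have "(\<Sum>i\<in>UNIV. (v i - e i * y i) * (\<Sum>j\<in>{j. E i j}. (v j - v i)/R i j))
      = (\<Sum>i\<in>UNIV. \<Sum>j\<in>{j. E i j}. (v i - e i*y i)*((v j - v i)/R i j))"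
    by (simp add: sum_distrib_left)
  also have "\<dots> \<le> (\<Sum>i\<in>UNIV. \<Sum>j\<in>{j. E i j}. ((v j)^2/(2*R i j) - (v i)^2/(2*R i j)) + (e i)^2*(y i)^2/(2*R i j))"
    by (intro sum_mono) (use pt in auto)
  also have "\<dots> = (\<Sum>i\<in>UNIV. \<Sum>j\<in>{j. E i j}. (v j)^2/(2*R i j)) - (\<Sum>i\<in>UNIV. \<Sum>j\<in>{j. E i j}. (v i)^2/(2*R i j))
       + (\<Sum>i\<in>UNIV. \<Sum>j\<in>{j. E i j}. (e i)^2*(y i)^2/(2*R i j))"
    by (simp add: sum.distrib sum_subtractf)
  also have "(\<Sum>i\<in>UNIV. \<Sum>j\<in>{j. E i j}. (v j)^2/(2*R i j)) = (\<Sum>i\<in>UNIV. \<Sum>j\<in>{j. E i j}. (v i)^2/(2*R i j))"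
  proof -
    have a: "\<And>f. (\<Sum>i\<in>UNIV. \<Sum>j\<in>{j. E i j}. f i j) = (\<Sum>i\<in>UNIV. \<Sum>j\<in>UNIV. if E i j then f i j else (0::real))"
      by (simp add: sum.If_cases)
    have "(\<Sum>i\<in>UNIV. \<Sum>j\<in>UNIV. if E i j then (v j)^2/(2*R i j) else 0)
        = (\<Sum>j\<in>UNIV. \<Sum>i\<in>UNIV. if E i j then (v j)^2/(2*R i j) else 0)"
      by (rule sum.swap)
    also have "\<dots> = (\<Sum>j\<in>UNIV. \<Sum>i\<in>UNIV. if E j i then (v j)^2/(2*R j i) else 0)"
      by (intro sum.cong refl) (metis sym Rsym)
    finally show ?thesis unfolding a .
  qed
  also have "(\<Sum>i\<in>UNIV. \<Sum>j\<in>{j. E i j}. (e i)^2*(y i)^2/(2*R i j))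
      = (\<Sum>i\<in>UNIV. (\<Sum>j\<in>{j. E i j}. 1/R i j) * (e i)^2/2 * (y i)^2)"
  proof (intro sum.cong refl)
    fix i
    have "(\<Sum>j\<in>{j. E i j}. (e i)^2*(y i)^2/(2*R i j)) = (\<Sum>j\<in>{j. E i j}. ((e i)^2*(y i)^2/2)*(1/R i j))"
      by (intro sum.cong) simp_all
    also have "\<dots> = ((e i)^2*(y i)^2/2)*(\<Sum>j\<in>{j. E i j}. 1/R i j)" by (simp add: sum_distrib_left)
    finally show "(\<Sum>j\<in>{j. E i j}. (e i)^2*(y i)^2/(2*R i j)) = (\<Sum>j\<in>{j. E i j}. 1/R i j) * (e i)^2/2 * (y i)^2"
      by simp
  qed
  finally show ?thesis by simp
qed


lemma inv_le1: "0 \<le> S \<Longrightarrow> 0 \<le> T \<Longrightarrow> T \<le> S \<Longrightarrow> 1/(1+S) * (T::real) \<le> 1"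
  by (simp add: field_simps)

lemma node:
  fixes C LC RC LV RV RL kC1 kC2 kC3 kV1 kV2 kV3 D :: real
  assumes pos: "0<C" "0<LC" "0<RC" "0<LV" "0<RV" "0<RL" and Dnn: "0 \<le> D"
    and g: "kC1 < 1" "kC2 < RC" "kC3 > 0" "kV1 < 1" "kV2 < RV" "0 < kV3"
       "kV3 < (1 / LV) * (kV1 - 1) * (kV2 - RV)"
  shows "\<exists>e1 e2 m M \<omega>. 0 < m \<and> 0 < \<omega> \<and> 1-kC1 \<noteq> 0 \<and> (1-kV1)*(RV-kV2) - kV3*LV \<noteq> 0 \<and>
     (\<forall>w. m * (\<Sum>k\<in>UNIV. (w$k)^2) \<le> Sloc C LC LV (1-kC1) kC3 (1-kV1) (RV-kV2) kV3 e1 e2 w) \<and>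
     (\<forall>w. Sloc C LC LV (1-kC1) kC3 (1-kV1) (RV-kV2) kV3 e1 e2 w \<le> M * (\<Sum>k\<in>UNIV. (w$k)^2)) \<and>
     (\<forall>w h u. h$1 = w$2/C + w$4/C + (- (w$1)/(RL*C) + u/C) \<longrightarrow>
        h$2 = (kC1 - 1)/LC * w$1 + (kC2 - RC)/LC * w$2 + kC3/LC * w$3 \<longrightarrow>
        h$3 = - w$2 \<longrightarrow>
        h$4 = (kV1 - 1)/LV * w$1 + (kV2 - RV)/LV * w$4 + kV3/LV * w$5 \<longrightarrow>
        h$5 = - w$1 \<longrightarrow>
        dSloc C LC LV (1-kC1) kC3 (1-kV1) (RV-kV2) kV3 e1 e2 w h
          \<le> - \<omega> * (\<Sum>k\<in>UNIV. (w$k)^2) + (w$1 - e2 * w$4) * u - D*e2^2/2*(w$4)^2)"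
proof -
  define aC where "aC = 1 - kC1"
  define bC where "bC = RC - kC2"
  define cC where "cC = kC3"
  define aV where "aV = 1 - kV1"
  define bV where "bV = RV - kV2"
  define cV where "cV = kV3"
  have p: "0<aC" "0<bC" "0<cC" "0<aV" "0<bV" "0<cV"
    unfolding aC_def bC_def cC_def aV_def bV_def cV_def using g by simp_all
  have De: "0 < aV*bV - cV*LV"
  proof -
    have "(kV1 - 1) * (kV2 - RV) = aV*bV" unfolding aV_def bV_def by (simp add: algebra_simps)
    then have "(1 / LV) * (kV1 - 1) * (kV2 - RV) = aV*bV/LV" by simp
    then have "cV < aV*bV/LV" using g(7) unfolding cV_def by linarith
    then have "cV*LV < aV*bV" using pos by (simp add: field_simps)
    then show ?thesis by simp
  qed
  define T1 where "T1 = 8*LC/(bC/aC)"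
  define T2 where "T2 = (4*RL*aC^2 + 4*bC^2/(bC/aC))/cC"
  define T3 where "T3 = 4*LC*aC^2/cC"
  define e1 where "e1 = 1/(1 + (T1 + T2 + T3))"
  have T: "0 \<le> T1" "0 \<le> T2" "0 \<le> T3" unfolding T1_def T2_def T3_def using pos p by simp_all
  have e1p: "0 < e1" "e1 \<le> 1" unfolding e1_def using T by simp_all
  have e1c: "e1 * T1 \<le> 1" "e1 * T2 \<le> 1" "e1 * T3 \<le> 1" unfolding e1_def using T
    by (intro inv_le1; simp)+
  define T4 where "T4 = 4/(bC/aC) + 4/RL + 4*RL*(C*bV/LV)^2 + D"
  define T5 where "T5 = 8*RL*(C*aV/LV)"
  define T6 where "T6 = (aV*bV - cV*LV)/(4*(bV^2+1))"
  define T7 where "T7 = 32*RL*(C*cV/LV)^2*(bV^2+1)/cV^2"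
  define T8 where "T8 = 2*C/(LV/(4*aV))"
  define e2 where "e2 = 1/(1 + (T4 + T5 + T6 + T7 + T8))"
  have b1: "0 < bV^2+1" by (metis add_pos_nonneg zero_less_one zero_le_power2 add.commute)
  have TT: "0 \<le> T4" "0 \<le> T5" "0 \<le> T6" "0 \<le> T7" "0 \<le> T8"
    unfolding T4_def T5_def T6_def T7_def T8_def using pos p De Dnn b1 by simp_all
  have e2p: "0 < e2" "e2 \<le> 1" unfolding e2_def using TT by simp_all
  have e2c: "e2 * T4 \<le> 1" "e2 * T5 \<le> 1" "e2 * T6 \<le> 1" "e2 * T7 \<le> 1" "e2 * T8 \<le> 1" unfolding e2_def using TT
    by (intro inv_le1; simp)+
  define c1 where "c1 = C/4"
  define c2 where "c2 = LC/(4*aC)"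
  define c3 where "c3 = cC/(4*aC)"
  define c4 where "c4 = (LV/(4*aV))/2"
  define c5 where "c5 = cV*aV/(2*(aV*bV+LV*cV))"
  define m where "m = min (min (min (min c1 c2) c3) c4) c5"
  have cpos: "0 < c1" "0 < c2" "0 < c3" "0 < c4" "0 < c5"
    unfolding c1_def c2_def c3_def c4_def c5_def using pos p by (simp_all add: add_pos_pos)
  have mpos: "0 < m" unfolding m_def using cpos by simp
  have mle: "m \<le> c1" "m \<le> c2" "m \<le> c3" "m \<le> c4" "m \<le> c5" unfolding m_def by simp_all
  define o1 where "o1 = 3/(8*RL)"
  define o2 where "o2 = 5*(bC/aC)/8"
  define o3 where "o3 = e1*cC/2"
  define o4 where "o4 = e2/4"
  define o5 where "o5 = e2*cV^2/(8*(bV^2+1))/2"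
  define \<omega> where "\<omega> = min (min (min (min o1 o2) o3) o4) o5"
  have opos: "0 < o1" "0 < o2" "0 < o3" "0 < o4" "0 < o5"
    unfolding o1_def o2_def o3_def o4_def o5_def using pos p e1p e2p b1 by simp_all
  have \<omega>pos: "0 < \<omega>" unfolding \<omega>_def using opos by simp
  have \<omega>le: "\<omega> \<le> o1" "\<omega> \<le> o2" "\<omega> \<le> o3" "\<omega> \<le> o4" "\<omega> \<le> o5" unfolding \<omega>_def by simp_all
  define M where "M = ((C/2 + e2*C/2) + (LC/(2*aC) + e1*LC/2) + (cC/(2*aC) + e1*LC/2)
             + ((bV*LV/2 + cV*LV/2)/(aV*bV - cV*LV) + e2*C/2)
             + ((cV*LV/2 + cV*aV/2)/(aV*bV - cV*LV)))"
  have sq: "\<And>w::real^5. (\<Sum>k\<in>UNIV. (w$k)^2) = (w$1)^2 + (w$2)^2 + (w$3)^2 + (w$4)^2 + (w$5)^2"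
    by (simp add: sum_5)
  have lower: "m * (\<Sum>k\<in>UNIV. (w$k)^2) \<le> Sloc C LC LV aC cC aV bV cV e1 e2 w" for w :: "real^5"
  proof -
    have L: "c1*(w$1)^2 + c2*(w$2)^2 + c3*(w$3)^2 + c4*(w$4)^2 + c5*(w$5)^2 \<le> Sloc C LC LV aC cC aV bV cV e1 e2 w"
      unfolding Sloc_def c1_def c2_def c3_def c4_def c5_def
      by (rule S_lower) (use pos p De e1p e2p e1c(3) e2c(5) in \<open>simp_all add: T3_def T8_def\<close>)
    have "m * (\<Sum>k\<in>UNIV. (w$k)^2) = m*(w$1)^2 + m*(w$2)^2 + m*(w$3)^2 + m*(w$4)^2 + m*(w$5)^2"
      unfolding sq by (simp add: algebra_simps)
    also have "\<dots> \<le> c1*(w$1)^2 + c2*(w$2)^2 + c3*(w$3)^2 + c4*(w$4)^2 + c5*(w$5)^2"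
      using mle by (intro add_mono mult_right_mono) simp_all
    finally show ?thesis using L by linarith
  qed
  have upper: "Sloc C LC LV aC cC aV bV cV e1 e2 w \<le> M * (\<Sum>k\<in>UNIV. (w$k)^2)" for w :: "real^5"
    unfolding Sloc_def M_def sq
    by (rule S_upper) (use pos p De e1p e2p in simp_all)
  have deriv: "dSloc C LC LV aC cC aV bV cV e1 e2 w h
          \<le> - \<omega> * (\<Sum>k\<in>UNIV. (w$k)^2) + (w$1 - e2 * w$4) * u - D*e2^2/2*(w$4)^2"
    if h1: "h$1 = w$2/C + w$4/C + (- (w$1)/(RL*C) + u/C)"
      and h2: "h$2 = (kC1 - 1)/LC * w$1 + (kC2 - RC)/LC * w$2 + kC3/LC * w$3"
      and h3: "h$3 = - w$2"
      and h4: "h$4 = (kV1 - 1)/LV * w$1 + (kV2 - RV)/LV * w$4 + kV3/LV * w$5"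
      and h5: "h$5 = - w$1" for w h :: "real^5" and u :: real
  proof -
    have h1': "h$1 = (w$2 + w$4 - w$1/RL + u)/C" unfolding h1 using pos by (simp add: field_simps)
    have h2': "h$2 = (-(aC*w$1) - bC*w$2 + cC*w$3)/LC" unfolding h2 using pos unfolding aC_def bC_def cC_def
      by (simp add: field_simps)
    have h4': "h$4 = (-(aV*w$1) - bV*w$4 + cV*w$5)/LV" unfolding h4 using pos unfolding aV_def bV_def cV_def
      by (simp add: field_simps)
    have eq: "dSloc C LC LV aC cC aV bV cV e1 e2 w h =
       -((w$1)^2)/RL - (bC/aC)*(w$2)^2 - (bV*(w$4) - cV*(w$5))^2/(aV*bV - cV*LV)
          + e1*(aC*(w$1)*(w$3) + bC*(w$2)*(w$3) - cC*(w$3)^2 + LC*(w$2)^2)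
          + e2*(-((w$4)*(w$2)) - (w$4)^2 + (w$1)*(w$4)/RL + (C*aV/LV)*(w$1)^2 + (C*bV/LV)*(w$1)*(w$4) - (C*cV/LV)*(w$1)*(w$5))
          + ((w$1) - e2*(w$4))*u"
      unfolding dSloc_def h1' h2' h3 h4' h5
      by (rule dS_eq) (use pos p De in simp_all)
    have li: "-((w$1)^2)/RL - (bC/aC)*(w$2)^2 - (bV*(w$4) - cV*(w$5))^2/(aV*bV - cV*LV)
          + e1*(aC*(w$1)*(w$3) + bC*(w$2)*(w$3) - cC*(w$3)^2 + LC*(w$2)^2)
          + e2*(-((w$4)*(w$2)) - (w$4)^2 + (w$1)*(w$4)/RL + (C*aV/LV)*(w$1)^2 + (C*bV/LV)*(w$1)*(w$4) - (C*cV/LV)*(w$1)*(w$5))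
          + D*e2^2/2*(w$4)^2
        \<le> - o1*(w$1)^2 - o2*(w$2)^2 - o3*(w$3)^2 - o4*(w$4)^2 - o5*(w$5)^2"
      unfolding o1_def o2_def o3_def o4_def o5_def
      by (rule local_ineq) (use pos p De Dnn e1p e2p e1c e2c in \<open>simp_all add: T1_def T2_def T4_def T5_def T6_def T7_def\<close>)
    have "\<omega> * (\<Sum>k\<in>UNIV. (w$k)^2) = \<omega>*(w$1)^2 + \<omega>*(w$2)^2 + \<omega>*(w$3)^2 + \<omega>*(w$4)^2 + \<omega>*(w$5)^2"
      unfolding sq by (simp add: algebra_simps)
    also have "\<dots> \<le> o1*(w$1)^2 + o2*(w$2)^2 + o3*(w$3)^2 + o4*(w$4)^2 + o5*(w$5)^2"
      using \<omega>le by (intro add_mono mult_right_mono) simp_all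
    finally show ?thesis using eq li by linarith
  qed
  show ?thesis
    apply (rule exI[of _ e1], rule exI[of _ e2], rule exI[of _ m], rule exI[of _ M], rule exI[of _ \<omega>])
    using mpos \<omega>pos p De lower upper deriv unfolding aC_def bC_def cC_def aV_def bV_def cV_def
    by auto
qed

lemma norm_sq_vec55:
  fixes x :: "real^5^'n::finite"
  shows "(norm x)^2 = (\<Sum>i\<in>UNIV. \<Sum>k\<in>UNIV. (x$i$k)^2)"
  unfolding power2_norm_eq_inner inner_vec_def inner_real_def by (simp add: power2_eq_square)

theorem theorem2:
  fixes E :: "'n::finite \<Rightarrow> 'n \<Rightarrow> bool"
    and R :: "'n \<Rightarrow> 'n \<Rightarrow> real"
    and Ct LC RC LV RV RL kC1 kC2 kC3 kV1 kV2 kV3 :: "'n \<Rightarrow> real"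
  assumes E_sym: "\<And>i j. E i j \<Longrightarrow> E j i"
    and E_irrefl: "\<And>i. \<not> E i i"
    and connected: "\<And>i j. E\<^sup>*\<^sup>* i j"
    and R_sym: "\<And>i j. E i j \<Longrightarrow> R i j = R j i"
    and R_pos: "\<And>i j. E i j \<Longrightarrow> R i j > 0"
    and pos: "\<And>i. Ct i > 0 \<and> LC i > 0 \<and> RC i > 0 \<and> LV i > 0 \<and> RV i > 0 \<and> RL i > 0"
    and gains: "\<And>i. kC1 i < 1 \<and> kC2 i < RC i \<and> kC3 i > 0 \<and> kV1 i < 1 \<and> kV2 i < RV i \<and>
                   0 < kV3 i \<and> kV3 i < (1 / LV i) * (kV1 i - 1) * (kV2 i - RV i)"
  shows "asymptotically_stable_origin
           (Fsys E R RL Ct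
              (\<lambda>i. Floc (Ct i) (LC i) (RC i) (LV i) (RV i)
                     (kC1 i) (kC2 i) (kC3 i) (kV1 i) (kV2 i) (kV3 i)))"
proof -
  define Fl where "Fl = (\<lambda>i. Floc (Ct i) (LC i) (RC i) (LV i) (RV i)
                     (kC1 i) (kC2 i) (kC3 i) (kV1 i) (kV2 i) (kV3 i))"
  define f where "f = Fsys E R RL Ct Fl"
  define D where "D i = (\<Sum>j\<in>{j. E i j}. 1 / R i j)" for i
  have Dnn: "0 \<le> D i" for i unfolding D_def using R_pos by (intro sum_nonneg) (simp add: less_imp_le)
  define Sl where "Sl i e1 e2 = Sloc (Ct i) (LC i) (LV i) (1 - kC1 i) (kC3 i) (1 - kV1 i) (RV i - kV2 i) (kV3 i) e1 e2" for i e1 e2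
  define dSl where "dSl i e1 e2 = dSloc (Ct i) (LC i) (LV i) (1 - kC1 i) (kC3 i) (1 - kV1 i) (RV i - kV2 i) (kV3 i) e1 e2" for i e1 e2
  define Q where "Q = (\<lambda>i e1 e2 m M \<omega>. 0 < m \<and> 0 < \<omega> \<and> 1 - kC1 i \<noteq> 0 \<and> (1 - kV1 i)*(RV i - kV2 i) - kV3 i * LV i \<noteq> 0 \<and>
     (\<forall>w. m * (\<Sum>k\<in>UNIV. (w$k)^2) \<le> Sl i e1 e2 w) \<and>
     (\<forall>w. Sl i e1 e2 w \<le> M * (\<Sum>k\<in>UNIV. (w$k)^2)) \<and>
     (\<forall>w h u. h$1 = w$2/Ct i + w$4/Ct i + (- (w$1)/(RL i*Ct i) + u/Ct i) \<longrightarrow>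
        h$2 = (kC1 i - 1)/LC i * w$1 + (kC2 i - RC i)/LC i * w$2 + kC3 i/LC i * w$3 \<longrightarrow>
        h$3 = - w$2 \<longrightarrow>
        h$4 = (kV1 i - 1)/LV i * w$1 + (kV2 i - RV i)/LV i * w$4 + kV3 i/LV i * w$5 \<longrightarrow>
        h$5 = - w$1 \<longrightarrow>
        dSl i e1 e2 w h \<le> - \<omega> * (\<Sum>k\<in>UNIV. (w$k)^2) + (w$1 - e2 * w$4) * u - D i*e2^2/2*(w$4)^2))"
  have ex: "\<exists>e1 e2 m M \<omega>. Q i e1 e2 m M \<omega>" for i
    unfolding Q_def Sl_def dSl_def
    by (rule node) (use pos[of i] gains[of i] Dnn[of i] in auto)
  obtain e1 e2 m M \<omega> where PQ: "\<And>i. Q i (e1 i) (e2 i) (m i) (M i) (\<omega> i)"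
    using ex by metis
  have P: "0 < m i \<and> 0 < \<omega> i \<and> 1 - kC1 i \<noteq> 0 \<and> (1 - kV1 i)*(RV i - kV2 i) - kV3 i * LV i \<noteq> 0 \<and>
     (\<forall>w. m i * (\<Sum>k\<in>UNIV. (w$k)^2) \<le> Sl i (e1 i) (e2 i) w) \<and>
     (\<forall>w. Sl i (e1 i) (e2 i) w \<le> M i * (\<Sum>k\<in>UNIV. (w$k)^2)) \<and>
     (\<forall>w h u. h$1 = w$2/Ct i + w$4/Ct i + (- (w$1)/(RL i*Ct i) + u/Ct i) \<longrightarrow>
        h$2 = (kC1 i - 1)/LC i * w$1 + (kC2 i - RC i)/LC i * w$2 + kC3 i/LC i * w$3 \<longrightarrow>
        h$3 = - w$2 \<longrightarrow>
        h$4 = (kV1 i - 1)/LV i * w$1 + (kV2 i - RV i)/LV i * w$4 + kV3 i/LV i * w$5 \<longrightarrow>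
        h$5 = - w$1 \<longrightarrow>
        dSl i (e1 i) (e2 i) w h \<le> - \<omega> i * (\<Sum>k\<in>UNIV. (w$k)^2) + (w$1 - e2 i * w$4) * u - D i*(e2 i)^2/2*(w$4)^2)" for i
    using PQ[of i] unfolding Q_def by simp
  define V where "V x = (\<Sum>i\<in>UNIV. Sl i (e1 i) (e2 i) (x$i))" for x :: "real^5^'n"
  define dV where "dV x h = (\<Sum>i\<in>UNIV. dSl i (e1 i) (e2 i) (x$i) (h$i))" for x h :: "real^5^'n"
  define m0 where "m0 = Min (range m)"
  define M0 where "M0 = max 1 (Max (range M))"
  define w0 where "w0 = Min (range \<omega>)"
  have m0pos: "0 < m0" unfolding m0_def using P by (subst Min_gr_iff) auto
  have m0le: "m0 \<le> m i" for i unfolding m0_def by (rule Min_le) auto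
  have w0pos: "0 < w0" unfolding w0_def using P by (subst Min_gr_iff) auto
  have w0le: "w0 \<le> \<omega> i" for i unfolding w0_def by (rule Min_le) auto
  have M0pos: "0 < M0" unfolding M0_def by simp
  have M0le: "M i \<le> M0" for i unfolding M0_def by (rule max.coboundedI2, rule Max_ge) auto
  show ?thesis unfolding Fl_def[symmetric] f_def[symmetric]
  proof (rule lyap_stable[where V = V and dV = dV and m = m0 and M = M0 and w = w0])
    show "f 0 = 0" unfolding f_def Fsys_def by (simp add: vec_eq_iff)
    show "0 < m0" "0 < M0" "0 < w0" by (fact m0pos M0pos w0pos)+
  next
    fix x :: "real^5^'n"
    have "m0 * (norm x)^2 = (\<Sum>i\<in>UNIV. m0 * (\<Sum>k\<in>UNIV. (x$i$k)^2))"
      by (simp add: norm_sq_vec55 sum_distrib_left)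
    also have "\<dots> \<le> (\<Sum>i\<in>UNIV. m i * (\<Sum>k\<in>UNIV. (x$i$k)^2))"
      by (intro sum_mono mult_right_mono m0le) (simp add: sum_nonneg)
    also have "\<dots> \<le> V x" unfolding V_def using P by (intro sum_mono) blast
    finally show "m0 * (norm x)^2 \<le> V x" .
  next
    fix x :: "real^5^'n"
    have "V x \<le> (\<Sum>i\<in>UNIV. M i * (\<Sum>k\<in>UNIV. (x$i$k)^2))" unfolding V_def using P by (intro sum_mono) blast
    also have "\<dots> \<le> (\<Sum>i\<in>UNIV. M0 * (\<Sum>k\<in>UNIV. (x$i$k)^2))"
      by (intro sum_mono mult_right_mono M0le) (simp add: sum_nonneg)
    also have "\<dots> = M0 * (norm x)^2"
      by (simp add: norm_sq_vec55 sum_distrib_left)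
    finally show "V x \<le> M0 * (norm x)^2" .
  next
    fix g :: "real \<Rightarrow> real^5^'n" and g' t T
    assume d: "(g has_vector_derivative g') (at t within T)"
    show "((\<lambda>s. V (g s)) has_real_derivative dV (g t) g') (at t within T)"
      unfolding V_def dV_def
    proof (rule V_deriv[OF d])
      fix i and h :: "real \<Rightarrow> real^5" and h'
      assume "(h has_vector_derivative h') (at t within T)"
      then show "((\<lambda>s. Sl i (e1 i) (e2 i) (h s)) has_real_derivative dSl i (e1 i) (e2 i) (h t) h') (at t within T)"
        unfolding Sl_def dSl_def by (rule Sloc_deriv) (use P[of i] in auto)
    qed
  next
    fix x :: "real^5^'n"
    define u where "u i = (\<Sum>j\<in>{j. E i j}. (x$j$1 - x$i$1)/R i j)" for i
    have each: "dSl i (e1 i) (e2 i) (x$i) (f x $ i) \<le> - \<omega> i * (\<Sum>k\<in>UNIV. (x$i$k)^2)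
        + (x$i$1 - e2 i * x$i$4) * u i - D i*(e2 i)^2/2*(x$i$4)^2" for i
    proof -
      have c: "f x $ i $ k = (Fl i *v x$i)$k +
         (if k = 1 then - (x$i$1)/(RL i * Ct i) + (\<Sum>j\<in>{j. E i j}. (x$j$1 - x$i$1)/(R i j * Ct i)) else 0)" for k
        unfolding f_def by (rule Fsys_comp) (rule E_irrefl)
      have us: "(\<Sum>j\<in>{j. E i j}. (x$j$1 - x$i$1)/(R i j * Ct i)) = u i / Ct i"
        unfolding u_def by (simp add: sum_divide_distrib divide_divide_eq_left)
      from P[of i] have D5: "\<forall>w h u. h$1 = w$2/Ct i + w$4/Ct i + (- (w$1)/(RL i*Ct i) + u/Ct i) \<longrightarrow>
        h$2 = (kC1 i - 1)/LC i * w$1 + (kC2 i - RC i)/LC i * w$2 + kC3 i/LC i * w$3 \<longrightarrow>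
        h$3 = - w$2 \<longrightarrow>
        h$4 = (kV1 i - 1)/LV i * w$1 + (kV2 i - RV i)/LV i * w$4 + kV3 i/LV i * w$5 \<longrightarrow>
        h$5 = - w$1 \<longrightarrow>
        dSl i (e1 i) (e2 i) w h \<le> - \<omega> i * (\<Sum>k\<in>UNIV. (w$k)^2) + (w$1 - e2 i * w$4) * u - D i*(e2 i)^2/2*(w$4)^2"
        by blast
      have h1: "f x $ i $ 1 = x$i$2/Ct i + x$i$4/Ct i + (- (x$i$1)/(RL i*Ct i) + u i/Ct i)"
        using c[of 1] unfolding us by (simp add: Fl_def Floc_mv)
      have h2: "f x $ i $ 2 = (kC1 i - 1)/LC i * x$i$1 + (kC2 i - RC i)/LC i * x$i$2 + kC3 i/LC i * x$i$3"
        using c[of 2] by (simp add: Fl_def Floc_mv)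
      have h3: "f x $ i $ 3 = - x$i$2"
        using c[of 3] by (simp add: Fl_def Floc_mv)
      have h4: "f x $ i $ 4 = (kV1 i - 1)/LV i * x$i$1 + (kV2 i - RV i)/LV i * x$i$4 + kV3 i/LV i * x$i$5"
        using c[of 4] by (simp add: Fl_def Floc_mv)
      have h5: "f x $ i $ 5 = - x$i$1"
        using c[of 5] by (simp add: Fl_def Floc_mv)
      show ?thesis using D5 h1 h2 h3 h4 h5 by blast
    qed
    have "dV x (f x) \<le> (\<Sum>i\<in>UNIV. - \<omega> i * (\<Sum>k\<in>UNIV. (x$i$k)^2)
        + (x$i$1 - e2 i * x$i$4) * u i - D i*(e2 i)^2/2*(x$i$4)^2)"
      unfolding dV_def by (intro sum_mono each)
    also have "\<dots> = (\<Sum>i\<in>UNIV. - \<omega> i * (\<Sum>k\<in>UNIV. (x$i$k)^2))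
        + ((\<Sum>i\<in>UNIV. (x$i$1 - e2 i * x$i$4) * u i) - (\<Sum>i\<in>UNIV. D i*(e2 i)^2/2*(x$i$4)^2))"
      by (simp add: sum.distrib sum_subtractf sum_negf)
    also have "\<dots> \<le> (\<Sum>i\<in>UNIV. - \<omega> i * (\<Sum>k\<in>UNIV. (x$i$k)^2)) + 0"
    proof -
      have "(\<Sum>i\<in>UNIV. (x$i$1 - e2 i * x$i$4) * u i) \<le> (\<Sum>i\<in>UNIV. D i*(e2 i)^2/2*(x$i$4)^2)"
        using coupling[of E R "\<lambda>i. x$i$1" e2 "\<lambda>i. x$i$4", OF E_sym R_sym R_pos]
        unfolding u_def D_def by simp
      then show ?thesis by simp
    qed
    also have "\<dots> \<le> (\<Sum>i\<in>UNIV. - w0 * (\<Sum>k\<in>UNIV. (x$i$k)^2))"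
      by (simp add: sum_negf, intro sum_mono mult_right_mono w0le sum_nonneg) simp
    also have "\<dots> = - w0 * (norm x)^2"
      by (simp add: norm_sq_vec55 sum_distrib_left sum_negf)
    finally show "dV x (f x) \<le> - w0 * (norm x)^2" .
  qed
qed

end
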